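(* Fix $\eta\in[0,1]$ and an integer $N\ge1$, and consider the boosted BEHC$(N)$ driven by strategies as in the context. Let $i\ge N+1$, let $x^{i-1}$ be such that $x_{i-N}^{i-1}\ne\mathbf 0^{N}$, and let $\hat u^{i}\in\{a,b\}^{i}$ be such that $\hat u_l=b$ for some $l\in[k_{i-1}:i-1]$. Then $$P(x_i\mid \hat u^{i},x^{i-1})=P\big(x_i\mid \hat u_l^{i},\,q_{i-1}(x_{i-N}^{i-1})\big)$$ (for all $x_i$, whenever the conditioning events have positive probability).
   Context: $\bar\eta=1-\eta$, $[a:b]=\{a,\dots,b\}$, $x_j^{k}=(x_j,\dots,x_k)$. $\mathcal Q=[0:N]$, $g_U(q,1)=0$, $g_U(q,0)=q+1$ for $q\in[0:N-1]$, $g_U(N,0)=N$. BEHC battery law $P(S_i=0\mid x_i,s_{i-1})=\bar\eta\,\mathbb{1}\{x_i=s_{i-1}\}$ for $x_i\le s_{i-1}$; modified law $P_U(s_i\mid x_i,s_{i-1},q_{i-1})=\mathbb{1}\{s_i=1\}$ if $q_{i-1}\in\{N-1,N\}$ and $x_i=0$, otherwise the BEHC law. Strategies: $\hat u\in\{a,b\}$ with $f_a(s)=0$ and $f_b(s)=s$. The joint distribution of $(s_0^n,\hat u^n,x^n,q_0^n)$ is $$\mathbb{1}\{s_0=0,q_0=0\}\prod_{i=1}^{n}P(\hat u_i\mid\hat u^{i-1},x^{i-1})\,\mathbb{1}\{x_i=f_{\hat u_i}(s_{i-1})\}\,P_U(s_i\mid x_i,s_{i-1},q_{i-1})\,\mathbb{1}\{q_i=g_U(q_{i-1},x_i)\},$$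 where the conditionals $P(\hat u_i\mid\hat u^{i-1},x^{i-1})$ are arbitrary. For $i\ge N+1$, $q_{i-1}=q_{i-1}(x_{i-N}^{i-1})$ is the number of 0's following the last 1 in $x_{i-N}^{i-1}$ ($=N$ if all are 0), and $k_{i-1}=i-(q_{i-1}+1)$, i.e. $k_{i-1}$ is the index of the last 1 among $x_{i-N}^{i-1}$ if there is one, and $i-(N+1)$ otherwise. *)

theory Defs
  imports "HOL-Library.FuncSet" Complex_Main
begin

text \<open>Strategies: True encodes b (f_b(s) = s), False encodes a (f_a(s) = 0).
  Channel inputs x, battery states s are naturals in {0,1}; q in [0:N].\<close>

definition fstrat :: "bool \<Rightarrow> nat \<Rightarrow> nat" where
  "fstrat u s = (if u then s else 0)"

definition gU :: "nat \<Rightarrow> nat \<Rightarrow> nat \<Rightarrow> nat" where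
  "gU N q x = (if x = 1 then 0 else if q < N then q + 1 else N)"

text \<open>BEHC battery law: P(S_i = s' | x_i = x, S_{i-1} = s), with
  P(S_i=0|x,s) = (1-eta) * 1{x = s}.\<close>
definition PB :: "real \<Rightarrow> nat \<Rightarrow> nat \<Rightarrow> nat \<Rightarrow> real" where
  "PB \<eta> s' x s = (if s' = 0 then (1 - \<eta>) * (if x = s then 1 else 0)
                   else 1 - (1 - \<eta>) * (if x = s then 1 else 0))"

definition PU :: "real \<Rightarrow> nat \<Rightarrow> nat \<Rightarrow> nat \<Rightarrow> nat \<Rightarrow> nat \<Rightarrow> real" where
  "PU \<eta> N s' x s q = (if (q = N - 1 \<or> q = N) \<and> x = 0 then (if s' = 1 then 1 else 0)
                      else PB \<eta> s' x s)"

definition ind :: "bool \<Rightarrow> real" where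
  "ind b = (if b then 1 else 0)"

text \<open>A policy pol us xs u = P(u_i = u | u^{i-1} = us, x^{i-1} = xs), where
  us = [u_1,...,u_{i-1}] and xs = [x_1,...,x_{i-1}].\<close>
definition valid_policy :: "(bool list \<Rightarrow> nat list \<Rightarrow> bool \<Rightarrow> real) \<Rightarrow> bool" where
  "valid_policy pol \<longleftrightarrow> (\<forall>us xs u. 0 \<le> pol us xs u) \<and>
                          (\<forall>us xs. pol us xs True + pol us xs False = 1)"

text \<open>Trajectory (s_0^n, u_1^n, x_1^n, q_0^n).\<close>
type_synonym traj = "(nat \<Rightarrow> nat) \<times> (nat \<Rightarrow> bool) \<times> (nat \<Rightarrow> nat) \<times> (nat \<Rightarrow> nat)"

definition Omega :: "nat \<Rightarrow> nat \<Rightarrow> traj set" where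
  "Omega N n = PiE {0..n} (\<lambda>_. {0,1}) \<times> PiE {1..n} (\<lambda>_. UNIV)
               \<times> PiE {1..n} (\<lambda>_. {0,1}) \<times> PiE {0..n} (\<lambda>_. {0..N})"

definition joint :: "real \<Rightarrow> nat \<Rightarrow> (bool list \<Rightarrow> nat list \<Rightarrow> bool \<Rightarrow> real) \<Rightarrow> nat \<Rightarrow> traj \<Rightarrow> real" where
  "joint \<eta> N pol n \<omega> = (case \<omega> of (s, u, x, q) \<Rightarrow>
     ind (s 0 = 0 \<and> q 0 = 0) *
     (\<Prod>j\<in>{1..n}. pol (map u [1..<j]) (map x [1..<j]) (u j)
        * ind (x j = fstrat (u j) (s (j - 1)))
        * PU \<eta> N (s j) (x j) (s (j - 1)) (q (j - 1))
        * ind (q j = gU N (q (j - 1)) (x j))))"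

definition prb :: "real \<Rightarrow> nat \<Rightarrow> (bool list \<Rightarrow> nat list \<Rightarrow> bool \<Rightarrow> real) \<Rightarrow> nat \<Rightarrow> traj set \<Rightarrow> real" where
  "prb \<eta> N pol n E = (\<Sum>\<omega>\<in>Omega N n \<inter> E. joint \<eta> N pol n \<omega>)"

definition cprb :: "real \<Rightarrow> nat \<Rightarrow> (bool list \<Rightarrow> nat list \<Rightarrow> bool \<Rightarrow> real) \<Rightarrow> nat \<Rightarrow> traj set \<Rightarrow> traj set \<Rightarrow> real" where
  "cprb \<eta> N pol n A B = prb \<eta> N pol n (A \<inter> B) / prb \<eta> N pol n B"

definition qwin :: "nat \<Rightarrow> (nat \<Rightarrow> nat) \<Rightarrow> nat \<Rightarrow> nat" where
  "qwin N x i = (if \<exists>j\<in>{i-N..i-1}. x j = 1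
                 then (i - 1) - (GREATEST j. j \<in> {i-N..i-1} \<and> x j = 1)
                 else N)"

end

theory Submission
  imports Defs
begin

definition SS :: "real \<Rightarrow> nat \<Rightarrow> (bool list \<Rightarrow> nat list \<Rightarrow> bool \<Rightarrow> real) \<Rightarrow> nat \<Rightarrow> (traj \<Rightarrow> real) \<Rightarrow> real" where
  "SS \<eta> N pol j F = (\<Sum>\<omega>\<in>Omega N j. joint \<eta> N pol j \<omega> * F \<omega>)"

definition extt :: "nat \<Rightarrow> traj \<Rightarrow> nat \<times> bool \<times> nat \<times> nat \<Rightarrow> traj" where
  "extt j \<omega> t = (case \<omega> of (s,u,x,q) \<Rightarrow> case t of (a,v,y,r) \<Rightarrow>
     (s(Suc j:=a), u(Suc j:=v), x(Suc j:=y), q(Suc j:=r)))"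

definition TT :: "nat \<Rightarrow> (nat \<times> bool \<times> nat \<times> nat) set" where
  "TT N = {0,1} \<times> UNIV \<times> {0,1} \<times> {0..N}"

definition stepw :: "real \<Rightarrow> nat \<Rightarrow> (bool list \<Rightarrow> nat list \<Rightarrow> bool \<Rightarrow> real) \<Rightarrow> nat \<Rightarrow> traj \<Rightarrow> nat \<times> bool \<times> nat \<times> nat \<Rightarrow> real" where
  "stepw \<eta> N pol j \<omega> t = (case \<omega> of (s,u,x,q) \<Rightarrow> case t of (a,v,y,r) \<Rightarrow>
     pol (map u [1..<Suc j]) (map x [1..<Suc j]) v * ind (y = fstrat v (s j))
     * PU \<eta> N a y (s j) (q j) * ind (r = gU N (q j) y))"

lemma map_upd_upt: "t \<le> Suc j \<Longrightarrow> map (f(Suc j := v)) [1..<t] = map f [1..<t]"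
  by (auto intro!: map_cong)

lemma joint_ext: "joint \<eta> N pol (Suc j) (extt j \<omega> t) = joint \<eta> N pol j \<omega> * stepw \<eta> N pol j \<omega> t"
proof -
  obtain s u x q where w: "\<omega> = (s,u,x,q)" by (cases \<omega>) auto
  obtain a v y r where tt: "t = (a,v,y,r)" by (cases t) auto
  define F where "F = (\<lambda>(s::nat\<Rightarrow>nat) (u::nat\<Rightarrow>bool) (x::nat\<Rightarrow>nat) (q::nat\<Rightarrow>nat) k. pol (map u [1..<k]) (map x [1..<k]) (u k)
        * ind (x k = fstrat (u k) (s (k - 1)))
        * PU \<eta> N (s k) (x k) (s (k - 1)) (q (k - 1))
        * ind (q k = gU N (q (k - 1)) (x k)))"
  have J: "joint \<eta> N pol n (s,u,x,q) = ind (s 0 = 0 \<and> q 0 = 0) * prod (F s u x q) {1..n}" for n s u x q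
    unfolding joint_def F_def by simp
  have "prod (F (s(Suc j:=a)) (u(Suc j:=v)) (x(Suc j:=y)) (q(Suc j:=r))) {1..j} = prod (F s u x q) {1..j}"
    by (rule prod.cong) (auto simp: map_upd_upt F_def)
  moreover have "F (s(Suc j:=a)) (u(Suc j:=v)) (x(Suc j:=y)) (q(Suc j:=r)) (Suc j) = stepw \<eta> N pol j \<omega> t"
    unfolding F_def stepw_def w tt by (simp add: map_upd_upt)
  ultimately show ?thesis
    unfolding w tt extt_def prod.case J by (simp add: mult.assoc)
qed

lemma upd_PiE: "f \<in> PiE {m..j} (\<lambda>_. B) \<Longrightarrow> b \<in> B \<Longrightarrow> m \<le> Suc j \<Longrightarrow> f(Suc j := b) \<in> PiE {m..Suc j} (\<lambda>_. B)"
  by (auto simp: PiE_iff extensional_def)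

lemma res_PiE: "g \<in> PiE {m..Suc j} (\<lambda>_. B) \<Longrightarrow> g(Suc j := undefined) \<in> PiE {m..j} (\<lambda>_. B)"
  by (auto simp: PiE_iff extensional_def)

lemma res_PiE2: "g \<in> PiE {m..Suc j} (\<lambda>_. B) \<Longrightarrow> m \<le> Suc j \<Longrightarrow> g (Suc j) \<in> B"
  by (auto simp: PiE_iff)

lemma PiE_top: "g \<in> PiE {m..j} (\<lambda>_. B) \<Longrightarrow> g (Suc j) = undefined"
  by (auto simp: PiE_iff extensional_def)

lemma bij_ext: "bij_betw (\<lambda>(\<omega>,t). extt j \<omega> t) (Omega N j \<times> TT N) (Omega N (Suc j))"
proof (rule bij_betw_byWitness[where f' = "\<lambda>(s,u,x,q). ((s(Suc j:=undefined), u(Suc j:=undefined), x(Suc j:=undefined), q(Suc j:=undefined)), (s (Suc j), u (Suc j), x (Suc j), q (Suc j)))"])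
  show "\<forall>p\<in>Omega N j \<times> TT N. (\<lambda>(s,u,x,q). ((s(Suc j:=undefined), u(Suc j:=undefined), x(Suc j:=undefined), q(Suc j:=undefined)), (s (Suc j), u (Suc j), x (Suc j), q (Suc j)))) ((\<lambda>(\<omega>,t). extt j \<omega> t) p) = p"
  proof
    fix p assume p: "p \<in> Omega N j \<times> TT N"
    obtain s u x q a v y r where pp: "p = ((s,u,x,q),(a,v,y,r))" by (cases p) auto
    from p have "s \<in> PiE {0..j} (\<lambda>_. {0,1})" "u \<in> PiE {1..j} (\<lambda>_. UNIV)" "x \<in> PiE {1..j} (\<lambda>_. {0,1})" "q \<in> PiE {0..j} (\<lambda>_. {0..N})"
      by (auto simp: pp Omega_def)
    then have "s(Suc j := undefined) = s" "u(Suc j := undefined) = u" "x(Suc j := undefined) = x" "q(Suc j := undefined) = q"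
      by (auto intro!: fun_upd_idem dest: PiE_top)
    then show "(\<lambda>(s,u,x,q). ((s(Suc j:=undefined), u(Suc j:=undefined), x(Suc j:=undefined), q(Suc j:=undefined)), (s (Suc j), u (Suc j), x (Suc j), q (Suc j)))) ((\<lambda>(\<omega>,t). extt j \<omega> t) p) = p"
      by (simp add: pp extt_def)
  qed
  show "\<forall>p\<in>Omega N (Suc j). (\<lambda>(\<omega>,t). extt j \<omega> t) ((\<lambda>(s,u,x,q). ((s(Suc j:=undefined), u(Suc j:=undefined), x(Suc j:=undefined), q(Suc j:=undefined)), (s (Suc j), u (Suc j), x (Suc j), q (Suc j)))) p) = p"
    by (auto simp: Omega_def TT_def extt_def)
  show "(\<lambda>(\<omega>,t). extt j \<omega> t) ` (Omega N j \<times> TT N) \<subseteq> Omega N (Suc j)"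
    apply (clarsimp simp: Omega_def TT_def extt_def simp del: atLeastAtMost_iff)
    apply (intro conjI upd_PiE)
    apply auto
    done
  show "(\<lambda>(s,u,x,q). ((s(Suc j:=undefined), u(Suc j:=undefined), x(Suc j:=undefined), q(Suc j:=undefined)), (s (Suc j), u (Suc j), x (Suc j), q (Suc j)))) ` Omega N (Suc j) \<subseteq> Omega N j \<times> TT N"
    apply (clarsimp simp: Omega_def TT_def simp del: atLeastAtMost_iff)
    apply (intro conjI res_PiE)
    apply (auto dest: res_PiE2)
    done
qed

lemma SS_step: "SS \<eta> N pol (Suc j) F = SS \<eta> N pol j (\<lambda>\<omega>. \<Sum>t\<in>TT N. stepw \<eta> N pol j \<omega> t * F (extt j \<omega> t))"
proof -
  have "SS \<eta> N pol (Suc j) F = (\<Sum>p\<in>Omega N j \<times> TT N. joint \<eta> N pol (Suc j) ((\<lambda>(\<omega>,t). extt j \<omega> t) p) * F ((\<lambda>(\<omega>,t). extt j \<omega> t) p))"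
    unfolding SS_def by (rule sum.reindex_bij_betw[OF bij_ext, symmetric])
  also have "\<dots> = (\<Sum>\<omega>\<in>Omega N j. \<Sum>t\<in>TT N. joint \<eta> N pol j \<omega> * (stepw \<eta> N pol j \<omega> t * F (extt j \<omega> t)))"
    unfolding sum.cartesian_product by (rule sum.cong) (auto simp: joint_ext mult.assoc)
  also have "\<dots> = SS \<eta> N pol j (\<lambda>\<omega>. \<Sum>t\<in>TT N. stepw \<eta> N pol j \<omega> t * F (extt j \<omega> t))"
    unfolding SS_def by (simp add: sum_distrib_left)
  finally show ?thesis .
qed

lemma ind_mult_r: "(z::real) * ind P = (if P then z else 0)" by (simp add: ind_def)
lemma ind_mult_l: "ind P * (z::real) = (if P then z else 0)" by (simp add: ind_def)

lemma fstrat01: "s \<in> {0,1} \<Longrightarrow> fstrat v s \<in> {0,1}" by (auto simp: fstrat_def)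
lemma gU_le: "q \<le> N \<Longrightarrow> gU N q y \<le> N" by (auto simp: gU_def)

lemma sum_TT:
  assumes "s j \<in> {0,1}" "q j \<le> N"
  shows "(\<Sum>t\<in>TT N. stepw \<eta> N pol j (s,u,x,q) t * G t) =
    (\<Sum>v\<in>UNIV. pol (map u [1..<Suc j]) (map x [1..<Suc j]) v *
       (\<Sum>a\<in>{0,1}. PU \<eta> N a (fstrat v (s j)) (s j) (q j) * G (a, v, fstrat v (s j), gU N (q j) (fstrat v (s j)))))"
proof -
  have r: "(\<Sum>r\<in>{0..N}. ind (r = gU N (q j) y) * Z r) = Z (gU N (q j) y)" for y and Z :: "nat \<Rightarrow> real"
    using gU_le[OF assms(2)] by (simp add: ind_mult_l sum.delta)
  have y: "(\<Sum>y\<in>{0,1}. ind (y = fstrat v (s j)) * Z y) = Z (fstrat v (s j))" for v and Z :: "nat \<Rightarrow> real"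
    using fstrat01[OF assms(1), of v] by (simp add: ind_mult_l sum.delta)
  have "(\<Sum>t\<in>TT N. stepw \<eta> N pol j (s,u,x,q) t * G t) =
     (\<Sum>a\<in>{0,1}. \<Sum>v\<in>UNIV. \<Sum>y\<in>{0,1}. \<Sum>r\<in>{0..N}. ind (r = gU N (q j) y) * (ind (y = fstrat v (s j)) *
        (pol (map u [1..<Suc j]) (map x [1..<Suc j]) v * (PU \<eta> N a y (s j) (q j) * G (a,v,y,r)))))"
    unfolding TT_def sum.cartesian_product' stepw_def by (simp add: ac_simps)
  also have "\<dots> = (\<Sum>a\<in>{0,1}. \<Sum>v\<in>UNIV. pol (map u [1..<Suc j]) (map x [1..<Suc j]) v * (PU \<eta> N a (fstrat v (s j)) (s j) (q j) * G (a, v, fstrat v (s j), gU N (q j) (fstrat v (s j)))))"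
    by (simp only: r y)
  also have "\<dots> = (\<Sum>v\<in>UNIV. \<Sum>a\<in>{0,1}. pol (map u [1..<Suc j]) (map x [1..<Suc j]) v * (PU \<eta> N a (fstrat v (s j)) (s j) (q j) * G (a, v, fstrat v (s j), gU N (q j) (fstrat v (s j)))))"
    by (rule sum.swap)
  finally show ?thesis by (simp only: sum_distrib_left)
qed

lemma PU_sum: "(\<Sum>a\<in>{0,1}. PU \<eta> N a y s q) = 1"
  by (simp add: PU_def PB_def)

lemma Omega_mem: "(s,u,x,q) \<in> Omega N j \<Longrightarrow> s j \<in> {0,1} \<and> q j \<le> N"
  by (auto simp: Omega_def PiE_iff)

lemma stepw_sum1:
  assumes "valid_policy pol" "\<omega> \<in> Omega N j"
  shows "(\<Sum>t\<in>TT N. stepw \<eta> N pol j \<omega> t) = 1"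
proof -
  obtain s u x q where w: "\<omega> = (s,u,x,q)" by (cases \<omega>) auto
  have m: "s j \<in> {0,1}" "q j \<le> N" using Omega_mem[of s u x q N j] assms(2) w by auto
  have "(\<Sum>t\<in>TT N. stepw \<eta> N pol j \<omega> t * 1) = 1"
    unfolding w sum_TT[of s j q N, OF m]
    apply (simp only: mult_1_right PU_sum)
    using assms(1) by (simp add: UNIV_bool valid_policy_def add.commute del: upt_Suc)
  then show ?thesis by simp
qed

lemma SS_marg:
  assumes "valid_policy pol" "\<And>\<omega> t. F (extt j \<omega> t) = F \<omega>"
  shows "SS \<eta> N pol (Suc j) F = SS \<eta> N pol j F"
proof -
  have "SS \<eta> N pol (Suc j) F = SS \<eta> N pol j (\<lambda>\<omega>. (\<Sum>t\<in>TT N. stepw \<eta> N pol j \<omega> t) * F \<omega>)"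
    unfolding SS_step assms(2) sum_distrib_right ..
  also have "\<dots> = SS \<eta> N pol j F"
    unfolding SS_def by (rule sum.cong) (auto simp: stepw_sum1[OF assms(1)])
  finally show ?thesis .
qed

lemma SS_marg_n:
  assumes "valid_policy pol" "\<And>j \<omega> t. i \<le> j \<Longrightarrow> F (extt j \<omega> t) = F \<omega>" "i \<le> n"
  shows "SS \<eta> N pol n F = SS \<eta> N pol i F"
  using assms(3)
proof (induction n)
  case 0 then show ?case by simp
next
  case (Suc n)
  show ?case
  proof (cases "i \<le> n")
    case True
    then show ?thesis using Suc SS_marg[OF assms(1), of F n] assms(2) by simp
  next
    case False
    then have "i = Suc n" using Suc by simp
    then show ?thesis by simp
  qed
qed

lemma SS_cong: "(\<And>\<omega>. \<omega> \<in> Omega N j \<Longrightarrow> joint \<eta> N pol j \<omega> \<noteq> 0 \<Longrightarrow> F \<omega> = G \<omega>) \<Longrightarrow> SS \<eta> N pol j F = SS \<eta> N pol j G"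
  unfolding SS_def by (rule sum.cong) auto

lemma SS_lin: "SS \<eta> N pol j (\<lambda>\<omega>. \<Sum>r\<in>A. c r * G r \<omega>) = (\<Sum>r\<in>A. c r * SS \<eta> N pol j (G r))"
  unfolding SS_def sum_distrib_left by (subst sum.swap) (simp add: ac_simps)

lemma finite_Omega: "finite (Omega N n)"
  unfolding Omega_def by (intro finite_cartesian_product finite_PiE) auto

lemma prb_SS: "prb \<eta> N pol n E = SS \<eta> N pol n (\<lambda>\<omega>. ind (\<omega> \<in> E))"
  unfolding prb_def SS_def by (simp add: sum.inter_restrict[OF finite_Omega] ind_mult_r)

lemma joint_nz:
  assumes "joint \<eta> N pol n (s,u,x,q) \<noteq> 0" "t \<in> {1..n}"
  shows "q t = gU N (q (t-1)) (x t)"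
proof -
  from assms(1) have "(\<Prod>j\<in>{1..n}. pol (map u [1..<j]) (map x [1..<j]) (u j)
        * ind (x j = fstrat (u j) (s (j - 1)))
        * PU \<eta> N (s j) (x j) (s (j - 1)) (q (j - 1))
        * ind (q j = gU N (q (j - 1)) (x j))) \<noteq> 0"
    unfolding joint_def by auto
  then have "ind (q t = gU N (q (t - 1)) (x t)) \<noteq> 0"
    using assms(2) by (simp add: prod_zero_iff)
  then show ?thesis by (simp add: ind_def split: if_splits)
qed

lemma q_track:
  assumes "joint \<eta> N pol n (s,u,x,q) \<noteq> 0" "1 \<le> k" "x k = 1"
  shows "k + d \<le> n \<Longrightarrow> d \<le> N \<Longrightarrow> (\<forall>t\<in>{k<..k+d}. x t = 0) \<Longrightarrow> q (k + d) = d"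
proof (induction d)
  case 0
  then show ?case using joint_nz[OF assms(1), of k] assms(2,3) by (simp add: gU_def)
next
  case (Suc d)
  then have "q (k + d) = d" by auto
  moreover have "x (Suc (k + d)) = 0" using Suc.prems by auto
  ultimately show ?case using joint_nz[OF assms(1), of "Suc (k+d)"] Suc.prems by (simp add: gU_def)
qed

definition Ev :: "((nat\<Rightarrow>bool)\<Rightarrow>(nat\<Rightarrow>nat)\<Rightarrow>bool) \<Rightarrow> nat \<Rightarrow> (nat\<Rightarrow>bool) \<Rightarrow> (nat\<Rightarrow>nat) \<Rightarrow> nat \<Rightarrow> (nat\<Rightarrow>bool) \<Rightarrow> (nat\<Rightarrow>nat) \<Rightarrow> bool" where
  "Ev H l us xs j u x = (H u x \<and> (\<forall>t\<in>{l..j}. u t = us t \<and> x t = xs t))"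

fun Mt :: "real \<Rightarrow> (nat\<Rightarrow>bool) \<Rightarrow> (nat\<Rightarrow>nat) \<Rightarrow> nat \<Rightarrow> nat \<Rightarrow> nat \<Rightarrow> nat \<Rightarrow> real" where
  "Mt \<eta> us xs l 0 \<sigma> \<tau> = ind (\<sigma> = \<tau>)"
| "Mt \<eta> us xs l (Suc d) \<sigma> \<tau> = (\<Sum>\<rho>\<in>{0,1}. (ind (fstrat (us (l+d)) \<rho> = xs (l+d)) * PB \<eta> \<sigma> (xs (l+d)) \<rho>) * Mt \<eta> us xs l d \<rho> \<tau>)"

lemma mult_if0: "(z::real) * (if P then y else 0) = (if P then z * y else 0)" by simp

lemma Mt_zero: "us l \<Longrightarrow> \<tau> \<noteq> xs l \<Longrightarrow> Mt \<eta> us xs l (Suc d) \<sigma> \<tau> = 0"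
  by (induction d arbitrary: \<sigma>) (auto simp: fstrat_def ind_def)

context
  fixes \<eta> :: real and N :: nat and pol :: "bool list \<Rightarrow> nat list \<Rightarrow> bool \<Rightarrow> real"
    and us :: "nat \<Rightarrow> bool" and xs :: "nat \<Rightarrow> nat" and i l k :: nat
    and H :: "(nat\<Rightarrow>bool)\<Rightarrow>(nat\<Rightarrow>nat)\<Rightarrow>bool"
  assumes kpos: "1 \<le> k" and kl: "k \<le> l" and li: "l < i"
    and xsk: "xs k = 1" and xs0: "\<forall>t\<in>{k<..<i}. xs t = 0" and ikN: "i - k \<le> N"
    and Hx: "\<forall>u x. H u x \<longrightarrow> (\<forall>t\<in>{k..<l}. x t = xs t)"
    and Hinv: "\<forall>u x j v y. l \<le> j \<longrightarrow> H (u(j:=v)) (x(j:=y)) = H u x"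
begin

lemma Ev_upd: "l \<le> Suc j \<Longrightarrow> Ev H l us xs (Suc j) (u(Suc j:=v)) (x(Suc j:=y)) = (Ev H l us xs j u x \<and> v = us (Suc j) \<and> y = xs (Suc j))"
  unfolding Ev_def using Hinv by (auto simp: le_Suc_eq)

lemma Ev_upd2: "j < Suc j' \<Longrightarrow> l \<le> Suc j' \<Longrightarrow> Ev H l us xs j (u(Suc j':=v)) (x(Suc j':=y)) = Ev H l us xs j u x"
  unfolding Ev_def using Hinv by auto

lemma PU_PB:
  assumes "Ev H l us xs j u x" "joint \<eta> N pol j (s,u,x,q) \<noteq> 0" "Suc j < i" "l \<le> Suc j"
  shows "PU \<eta> N \<sigma> (xs (Suc j)) (s j) (q j) = PB \<eta> \<sigma> (xs (Suc j)) (s j)"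
proof (cases "Suc j = k")
  case True
  then show ?thesis using xsk by (simp add: PU_def)
next
  case False
  then have kj: "k \<le> j" using kl assms(4) by simp
  have xm: "x t = xs t" if "k \<le> t" "t \<le> j" for t
    using assms(1) Hx that unfolding Ev_def by (cases "t < l") auto
  have "q (k + (j - k)) = j - k"
    apply (rule q_track[OF assms(2) kpos])
    using xm[of k] kj xsk apply simp
    using kj apply simp
    using kj assms(3) ikN apply simp
    using xm xs0 assms(3) by auto
  then have "q j = j - k" using kj by simp
  moreover have "j - k + 2 \<le> N" using assms(3) ikN kj by linarith
  ultimately show ?thesis by (auto simp: PU_def)
qed

lemma pw_step:
  assumes "(s,u,x,q) \<in> Omega N j" "joint \<eta> N pol j (s,u,x,q) \<noteq> 0" "Suc j < i" "l \<le> Suc j" "\<sigma> \<in> {0,1}"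
  shows "(\<Sum>t\<in>TT N. stepw \<eta> N pol j (s,u,x,q) t * (\<lambda>(s,u,x,q). ind (Ev H l us xs (Suc j) u x) * ind (s (Suc j) = \<sigma>) * \<psi> u x) (extt j (s,u,x,q) t))
   = (\<Sum>\<rho>\<in>{0,1}. (ind (fstrat (us (Suc j)) \<rho> = xs (Suc j)) * PB \<eta> \<sigma> (xs (Suc j)) \<rho>) * (ind (Ev H l us xs j u x) * ind (s j = \<rho>) * (pol (map u [1..<Suc j]) (map x [1..<Suc j]) (us (Suc j)) * \<psi> (u(Suc j := us (Suc j))) (x(Suc j := xs (Suc j))))))"
proof -
  have m: "s j \<in> {0,1}" "q j \<le> N" using Omega_mem[OF assms(1)] by auto
  let ?P = "pol (map u [1..<Suc j]) (map x [1..<Suc j])"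
  let ?f = "\<lambda>v. fstrat v (s j)"
  have L: "(\<Sum>t\<in>TT N. stepw \<eta> N pol j (s,u,x,q) t * (\<lambda>(s,u,x,q). ind (Ev H l us xs (Suc j) u x) * ind (s (Suc j) = \<sigma>) * \<psi> u x) (extt j (s,u,x,q) t))
     = (\<Sum>v\<in>UNIV. ?P v * (\<Sum>a\<in>{0,1}. PU \<eta> N a (?f v) (s j) (q j) * (ind (Ev H l us xs j u x \<and> v = us (Suc j) \<and> ?f v = xs (Suc j)) * ind (a = \<sigma>) * \<psi> (u(Suc j:=v)) (x(Suc j:=?f v)))))"
    unfolding sum_TT[of s j q N, OF m] by (simp add: extt_def Ev_upd[OF assms(4)] del: upt_Suc)
  also have "\<dots> = (\<Sum>v\<in>UNIV. ?P v * (PU \<eta> N \<sigma> (?f v) (s j) (q j) * (ind (Ev H l us xs j u x \<and> v = us (Suc j) \<and> ?f v = xs (Suc j)) * \<psi> (u(Suc j:=v)) (x(Suc j:=?f v)))))"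
    using assms(5) by (auto simp: ind_def)
  also have "\<dots> = ?P (us (Suc j)) * (PU \<eta> N \<sigma> (?f (us (Suc j))) (s j) (q j) * (ind (Ev H l us xs j u x \<and> ?f (us (Suc j)) = xs (Suc j)) * \<psi> (u(Suc j:=us (Suc j))) (x(Suc j:=?f (us (Suc j))))))"
    by (cases "us (Suc j)") (simp_all add: UNIV_bool ind_def del: upt_Suc)
  also have "\<dots> = ?P (us (Suc j)) * (PB \<eta> \<sigma> (xs (Suc j)) (s j) * (ind (Ev H l us xs j u x \<and> ?f (us (Suc j)) = xs (Suc j)) * \<psi> (u(Suc j:=us (Suc j))) (x(Suc j:=xs (Suc j)))))"
    using PU_PB[OF _ assms(2) assms(3) assms(4)] by (auto simp: ind_def)
  finally have X: "(\<Sum>t\<in>TT N. stepw \<eta> N pol j (s,u,x,q) t * (\<lambda>(s,u,x,q). ind (Ev H l us xs (Suc j) u x) * ind (s (Suc j) = \<sigma>) * \<psi> u x) (extt j (s,u,x,q) t)) = ?P (us (Suc j)) * (PB \<eta> \<sigma> (xs (Suc j)) (s j) * (ind (Ev H l us xs j u x \<and> ?f (us (Suc j)) = xs (Suc j)) * \<psi> (u(Suc j:=us (Suc j))) (x(Suc j:=xs (Suc j)))))" .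
  show ?thesis unfolding X using m by (auto simp: ind_def simp del: upt_Suc)
qed

lemma inv: "d \<le> i - l \<Longrightarrow> \<forall>\<psi>. \<exists>\<Psi>. \<forall>\<sigma>\<in>{0,1}. SS \<eta> N pol (l-1+d) (\<lambda>(s,u,x,q). ind (Ev H l us xs (l-1+d) u x) * ind (s (l-1+d) = \<sigma>) * \<psi> u x)
     = (\<Sum>\<tau>\<in>{0,1}. Mt \<eta> us xs l d \<sigma> \<tau> * SS \<eta> N pol (l-1) (\<lambda>(s,u,x,q). ind (H u x) * ind (s (l-1) = \<tau>) * \<Psi> u x))"
proof (induction d)
  case 0
  have E: "Ev H l us xs (l - Suc 0) u x = H u x" for u x using kpos kl by (auto simp: Ev_def)
  show ?case
  proof (intro allI)
    fix \<psi> :: "(nat\<Rightarrow>bool) \<Rightarrow> (nat\<Rightarrow>nat) \<Rightarrow> real"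
    show "\<exists>\<Psi>. \<forall>\<sigma>\<in>{0,1}. SS \<eta> N pol (l-1+0) (\<lambda>(s,u,x,q). ind (Ev H l us xs (l-1+0) u x) * ind (s (l-1+0) = \<sigma>) * \<psi> u x)
     = (\<Sum>\<tau>\<in>{0,1}. Mt \<eta> us xs l 0 \<sigma> \<tau> * SS \<eta> N pol (l-1) (\<lambda>(s,u,x,q). ind (H u x) * ind (s (l-1) = \<tau>) * \<Psi> u x))"
      by (rule exI[of _ \<psi>]) (auto simp: E ind_def)
  qed
next
  case (Suc d)
  define j where "j = l - 1 + d"
  have jS: "l - 1 + Suc d = Suc j" using kpos kl unfolding j_def by simp
  have ji: "Suc j < i" and lj: "l \<le> Suc j" using Suc.prems kpos kl li unfolding j_def by auto
  show ?case
  proof (intro allI)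
    fix \<psi> :: "(nat\<Rightarrow>bool) \<Rightarrow> (nat\<Rightarrow>nat) \<Rightarrow> real"
    define \<psi>' where "\<psi>' = (\<lambda>u x. pol (map u [1..<Suc j]) (map x [1..<Suc j]) (us (Suc j)) * \<psi> (u(Suc j := us (Suc j))) (x(Suc j := xs (Suc j))))"
    from Suc.IH Suc.prems obtain \<Psi> where IH: "\<forall>\<sigma>\<in>{0,1}. SS \<eta> N pol j (\<lambda>(s,u,x,q). ind (Ev H l us xs j u x) * ind (s j = \<sigma>) * \<psi>' u x)
     = (\<Sum>\<tau>\<in>{0,1}. Mt \<eta> us xs l d \<sigma> \<tau> * SS \<eta> N pol (l-1) (\<lambda>(s,u,x,q). ind (H u x) * ind (s (l-1) = \<tau>) * \<Psi> u x))"
      unfolding j_def by fastforce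
    let ?K = "\<lambda>\<tau>. SS \<eta> N pol (l-1) (\<lambda>(s,u,x,q). ind (H u x) * ind (s (l-1) = \<tau>) * \<Psi> u x)"
    let ?T = "\<lambda>\<sigma> \<rho>. ind (fstrat (us (Suc j)) \<rho> = xs (Suc j)) * PB \<eta> \<sigma> (xs (Suc j)) \<rho>"
    have "SS \<eta> N pol (Suc j) (\<lambda>(s,u,x,q). ind (Ev H l us xs (Suc j) u x) * ind (s (Suc j) = \<sigma>) * \<psi> u x)
     = (\<Sum>\<tau>\<in>{0,1}. Mt \<eta> us xs l (Suc d) \<sigma> \<tau> * ?K \<tau>)" if \<sigma>: "\<sigma> \<in> {0,1}" for \<sigma>
    proof -
      have "SS \<eta> N pol (Suc j) (\<lambda>(s,u,x,q). ind (Ev H l us xs (Suc j) u x) * ind (s (Suc j) = \<sigma>) * \<psi> u x)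
        = SS \<eta> N pol j (\<lambda>\<omega>. \<Sum>\<rho>\<in>{0,1}. ?T \<sigma> \<rho> * (\<lambda>(s,u,x,q). ind (Ev H l us xs j u x) * ind (s j = \<rho>) * \<psi>' u x) \<omega>)"
        unfolding SS_step
      proof (rule SS_cong)
        fix \<omega> assume w: "\<omega> \<in> Omega N j" "joint \<eta> N pol j \<omega> \<noteq> 0"
        obtain s u x q where ww: "\<omega> = (s,u,x,q)" by (cases \<omega>) auto
        show "(\<Sum>t\<in>TT N. stepw \<eta> N pol j \<omega> t * (\<lambda>(s,u,x,q). ind (Ev H l us xs (Suc j) u x) * ind (s (Suc j) = \<sigma>) * \<psi> u x) (extt j \<omega> t))
          = (\<Sum>\<rho>\<in>{0,1}. ?T \<sigma> \<rho> * (\<lambda>(s,u,x,q). ind (Ev H l us xs j u x) * ind (s j = \<rho>) * \<psi>' u x) \<omega>)"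
          unfolding ww using pw_step[of s u x q j \<sigma> \<psi>] w ji lj \<sigma> unfolding ww \<psi>'_def by simp
      qed
      also have "\<dots> = (\<Sum>\<rho>\<in>{0,1}. ?T \<sigma> \<rho> * SS \<eta> N pol j (\<lambda>(s,u,x,q). ind (Ev H l us xs j u x) * ind (s j = \<rho>) * \<psi>' u x))"
        by (rule SS_lin)
      also have "\<dots> = (\<Sum>\<rho>\<in>{0,1}. ?T \<sigma> \<rho> * (\<Sum>\<tau>\<in>{0,1}. Mt \<eta> us xs l d \<rho> \<tau> * ?K \<tau>))"
        using IH by (intro sum.cong refl) auto
      also have "\<dots> = (\<Sum>\<tau>\<in>{0,1}. (\<Sum>\<rho>\<in>{0,1}. ?T \<sigma> \<rho> * Mt \<eta> us xs l d \<rho> \<tau>) * ?K \<tau>)"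
        unfolding sum_distrib_left sum_distrib_right by (subst sum.swap) (simp add: ac_simps)
      also have "\<dots> = (\<Sum>\<tau>\<in>{0,1}. Mt \<eta> us xs l (Suc d) \<sigma> \<tau> * ?K \<tau>)"
        using kpos kl unfolding j_def by simp
      finally show ?thesis .
    qed
    then show "\<exists>\<Psi>. \<forall>\<sigma>\<in>{0,1}. SS \<eta> N pol (l-1+Suc d) (\<lambda>(s,u,x,q). ind (Ev H l us xs (l-1+Suc d) u x) * ind (s (l-1+Suc d) = \<sigma>) * \<psi> u x)
     = (\<Sum>\<tau>\<in>{0,1}. Mt \<eta> us xs l (Suc d) \<sigma> \<tau> * SS \<eta> N pol (l-1) (\<lambda>(s,u,x,q). ind (H u x) * ind (s (l-1) = \<tau>) * \<Psi> u x))"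
      unfolding jS by blast
  qed
qed

lemma sum01_single: "(c::nat) \<in> {0,1} \<Longrightarrow> (\<And>\<tau>. \<tau> \<noteq> c \<Longrightarrow> g \<tau> = (0::real)) \<Longrightarrow> (\<Sum>\<tau>\<in>{0,1}. g \<tau>) = g c"
  by auto

lemma final:
  assumes usl: "us l" and xsl: "xs l \<in> {0,1}"
  shows "\<exists>K. \<forall>\<phi>. SS \<eta> N pol i (\<lambda>(s,u,x,q). ind (Ev H l us xs (i-1) u x) * ind (u i = us i) * \<phi> (x i))
      = (\<Sum>\<rho>\<in>{0,1}. \<phi> (fstrat (us i) \<rho>) * Mt \<eta> us xs l (i-l) \<rho> (xs l)) * K"
proof -
  obtain i' where ii: "i = Suc i'" using li by (cases i) auto
  have lii: "l - 1 + (i - l) = i'" using ii li kpos kl by simp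
  define \<psi> where "\<psi> = (\<lambda>u x. pol (map u [1..<Suc i']) (map x [1..<Suc i']) (us (Suc i')))"
  from inv[of "i - l"] obtain \<Psi> where IV: "\<forall>\<sigma>\<in>{0,1}. SS \<eta> N pol i' (\<lambda>(s,u,x,q). ind (Ev H l us xs i' u x) * ind (s i' = \<sigma>) * \<psi> u x)
     = (\<Sum>\<tau>\<in>{0,1}. Mt \<eta> us xs l (i-l) \<sigma> \<tau> * SS \<eta> N pol (l-1) (\<lambda>(s,u,x,q). ind (H u x) * ind (s (l-1) = \<tau>) * \<Psi> u x))"
    unfolding lii by blast
  let ?K = "\<lambda>\<tau>. SS \<eta> N pol (l-1) (\<lambda>(s,u,x,q). ind (H u x) * ind (s (l-1) = \<tau>) * \<Psi> u x)"
  obtain d where d: "i - l = Suc d" using li by (cases "i - l") auto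
  have MZ: "Mt \<eta> us xs l (i-l) \<rho> \<tau> = 0" if "\<tau> \<noteq> xs l" for \<rho> \<tau>
    unfolding d using Mt_zero[of us l \<tau> xs, OF usl that] .
  show ?thesis
  proof (intro exI allI)
    fix \<phi> :: "nat \<Rightarrow> real"
    have "SS \<eta> N pol i (\<lambda>(s,u,x,q). ind (Ev H l us xs (i-1) u x) * ind (u i = us i) * \<phi> (x i))
      = SS \<eta> N pol i' (\<lambda>\<omega>. \<Sum>\<rho>\<in>{0,1}. \<phi> (fstrat (us i) \<rho>) * (\<lambda>(s,u,x,q). ind (Ev H l us xs i' u x) * ind (s i' = \<rho>) * \<psi> u x) \<omega>)"
      unfolding ii SS_step
    proof (rule SS_cong)
      fix \<omega> assume w: "\<omega> \<in> Omega N i'" "joint \<eta> N pol i' \<omega> \<noteq> 0"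
      obtain s u x q where ww: "\<omega> = (s,u,x,q)" by (cases \<omega>) auto
      have m: "s i' \<in> {0,1}" "q i' \<le> N" using Omega_mem w(1) ww by auto
      have lS: "l \<le> Suc i'" using li ii by simp
      have "(\<Sum>t\<in>TT N. stepw \<eta> N pol i' (s,u,x,q) t * (\<lambda>(s,u,x,q). ind (Ev H l us xs (Suc i' - 1) u x) * ind (u (Suc i') = us (Suc i')) * \<phi> (x (Suc i'))) (extt i' (s,u,x,q) t))
        = (\<Sum>v\<in>UNIV. pol (map u [1..<Suc i']) (map x [1..<Suc i']) v * ((\<Sum>a\<in>{0,1}. PU \<eta> N a (fstrat v (s i')) (s i') (q i')) * (ind (Ev H l us xs i' u x) * ind (v = us (Suc i')) * \<phi> (fstrat v (s i')))))"
        unfolding sum_TT[of s i' q N, OF m] sum_distrib_right by (simp add: extt_def Ev_upd2[OF _ lS] mult.assoc del: upt_Suc)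
      also have "\<dots> = pol (map u [1..<Suc i']) (map x [1..<Suc i']) (us (Suc i')) * (ind (Ev H l us xs i' u x) * \<phi> (fstrat (us (Suc i')) (s i')))"
        unfolding PU_sum by (cases "us (Suc i')") (simp_all add: UNIV_bool ind_def del: upt_Suc)
      also have "\<dots> = (\<Sum>\<rho>\<in>{0,1}. \<phi> (fstrat (us (Suc i')) \<rho>) * (\<lambda>(s,u,x,q). ind (Ev H l us xs i' u x) * ind (s i' = \<rho>) * \<psi> u x) (s,u,x,q))"
        using m unfolding \<psi>_def ii by (auto simp: ind_def simp del: upt_Suc)
      finally show "(\<Sum>t\<in>TT N. stepw \<eta> N pol i' \<omega> t * (\<lambda>(s,u,x,q). ind (Ev H l us xs (Suc i' - 1) u x) * ind (u (Suc i') = us (Suc i')) * \<phi> (x (Suc i'))) (extt i' \<omega> t))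
        = (\<Sum>\<rho>\<in>{0,1}. \<phi> (fstrat (us (Suc i')) \<rho>) * (\<lambda>(s,u,x,q). ind (Ev H l us xs i' u x) * ind (s i' = \<rho>) * \<psi> u x) \<omega>)"
        unfolding ww .
    qed
    also have "\<dots> = (\<Sum>\<rho>\<in>{0,1}. \<phi> (fstrat (us i) \<rho>) * SS \<eta> N pol i' (\<lambda>(s,u,x,q). ind (Ev H l us xs i' u x) * ind (s i' = \<rho>) * \<psi> u x))"
      by (rule SS_lin)
    also have "\<dots> = (\<Sum>\<rho>\<in>{0,1}. \<phi> (fstrat (us i) \<rho>) * (\<Sum>\<tau>\<in>{0,1}. Mt \<eta> us xs l (i-l) \<rho> \<tau> * ?K \<tau>))"
      using IV by (intro sum.cong refl) auto
    also have "\<dots> = (\<Sum>\<rho>\<in>{0,1}. \<phi> (fstrat (us i) \<rho>) * (Mt \<eta> us xs l (i-l) \<rho> (xs l) * ?K (xs l)))"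
      by (intro sum.cong refl arg_cong2[where f="(*)"] sum01_single[OF xsl]) (simp add: MZ)
    also have "\<dots> = (\<Sum>\<rho>\<in>{0,1}. \<phi> (fstrat (us i) \<rho>) * Mt \<eta> us xs l (i-l) \<rho> (xs l)) * ?K (xs l)"
      unfolding sum_distrib_right by (simp add: ac_simps)
    finally show "SS \<eta> N pol i (\<lambda>(s,u,x,q). ind (Ev H l us xs (i-1) u x) * ind (u i = us i) * \<phi> (x i))
      = (\<Sum>\<rho>\<in>{0,1}. \<phi> (fstrat (us i) \<rho>) * Mt \<eta> us xs l (i-l) \<rho> (xs l)) * ?K (xs l)" .
  qed
qed

end


lemma qwin_char:
  assumes x01: "\<forall>t\<in>{i-N..i-1}. x t \<in> {0,1}" and G: "i-N \<le> G" "G \<le> i-1" and iN: "N+1 \<le> i"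
  shows "qwin N x i = i - 1 - G \<longleftrightarrow> (x G = 1 \<and> (\<forall>t\<in>{G<..i-1}. x t = 0))"
proof
  let ?P = "\<lambda>j. j \<in> {i-N..i-1} \<and> x j = 1"
  assume L: "qwin N x i = i-1-G"
  show "x G = 1 \<and> (\<forall>t\<in>{G<..i-1}. x t = 0)"
  proof (cases "\<exists>j\<in>{i-N..i-1}. x j = 1")
    case True
    then obtain j0 where j0: "j0 \<in> {i-N..i-1}" "x j0 = 1" by blast
    have P: "?P (Greatest ?P)" by (rule GreatestI_nat[of ?P j0 "i-1"]) (use j0 in auto)
    have Pm: "y \<le> Greatest ?P" if "?P y" for y by (rule Greatest_le_nat[of ?P y "i-1"]) (use that in auto)
    have "qwin N x i = i - 1 - Greatest ?P" using True unfolding qwin_def by simp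
    with L have "i - 1 - Greatest ?P = i - 1 - G" by simp
    moreover have "Greatest ?P \<le> i - 1" using P by simp
    ultimately have GG: "Greatest ?P = G" using G(2) by linarith
    show ?thesis
    proof
      show "x G = 1" using P GG by simp
      show "\<forall>t\<in>{G<..i-1}. x t = 0"
      proof
        fix t assume t: "t \<in> {G<..i-1}"
        then have tw: "t \<in> {i-N..i-1}" using G by auto
        have "x t \<noteq> 1" using Pm[of t] t tw GG by auto
        then show "x t = 0" using x01 tw by auto
      qed
    qed
  next
    case False
    then have "qwin N x i = N" unfolding qwin_def by simp
    with L G iN show ?thesis by arith
  qed
next
  let ?P = "\<lambda>j. j \<in> {i-N..i-1} \<and> x j = 1"
  assume R: "x G = 1 \<and> (\<forall>t\<in>{G<..i-1}. x t = 0)"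
  have ex: "\<exists>j\<in>{i-N..i-1}. x j = 1" using R G by auto
  have "Greatest ?P = G"
  proof (rule Greatest_equality)
    show "?P G" using R G by auto
    fix y assume "?P y"
    then show "y \<le> G" using R by (cases "G < y") auto
  qed
  then show "qwin N x i = i - 1 - G" using ex unfolding qwin_def by simp
qed

lemma qwin_local: "(\<forall>t. t < i \<longrightarrow> x' t = x t) \<Longrightarrow> 1 \<le> i \<Longrightarrow> qwin N x' i = qwin N x i"
proof -
  assume a: "\<forall>t. t < i \<longrightarrow> x' t = x t" "1 \<le> i"
  have xeq: "x' j = x j" if "j \<in> {i-N..i-1}" for j using a that by auto
  have e1: "(\<exists>j\<in>{i-N..i-1}. x' j = 1) = (\<exists>j\<in>{i-N..i-1}. x j = 1)" by (rule bex_cong) (auto simp: xeq)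
  have e2: "(\<lambda>j. j \<in> {i-N..i-1} \<and> x' j = 1) = (\<lambda>j. j \<in> {i-N..i-1} \<and> x j = 1)" using xeq by auto
  show ?thesis unfolding qwin_def e1 e2 ..
qed

lemma split_ivl1: "(l::nat) < i \<Longrightarrow> (\<forall>t\<in>{l..i}. P t) = ((\<forall>t\<in>{l..i-1}. P t) \<and> P i)"
proof
  assume li: "l < i" and a: "(\<forall>t\<in>{l..i-1}. P t) \<and> P i"
  show "\<forall>t\<in>{l..i}. P t"
  proof
    fix t assume t: "t \<in> {l..i}"
    show "P t"
    proof (cases "t = i")
      case True then show ?thesis using a by simp
    next
      case False
      then have "t \<in> {l..i-1}" using t by auto
      then show ?thesis using a by blast
    qed
  qed
qed auto

lemma split_ivl2: "(G::nat) \<le> l \<Longrightarrow> l \<le> m \<Longrightarrow> (\<forall>t\<in>{G..m}. P t) = ((\<forall>t\<in>{G..<l}. P t) \<and> (\<forall>t\<in>{l..m}. P t))"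
proof
  assume a: "(\<forall>t\<in>{G..<l}. P t) \<and> (\<forall>t\<in>{l..m}. P t)"
  show "\<forall>t\<in>{G..m}. P t"
  proof
    fix t assume t: "t \<in> {G..m}"
    show "P t"
    proof (cases "t < l")
      case True then show ?thesis using a t by auto
    next
      case False
      then have "t \<in> {l..m}" using t by auto
      then show ?thesis using a by blast
    qed
  qed
qed auto

theorem lemma6:
  fixes \<eta> :: real and N n i l :: nat
    and pol :: "bool list \<Rightarrow> nat list \<Rightarrow> bool \<Rightarrow> real"
    and xs :: "nat \<Rightarrow> nat" and us :: "nat \<Rightarrow> bool" and xi :: nat
  assumes "0 \<le> \<eta>" "\<eta> \<le> 1" "1 \<le> N"
    and "valid_policy pol"
    and "N + 1 \<le> i" "i \<le> n"
    and "\<forall>j\<in>{1..i-1}. xs j \<in> {0,1}"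
    and "\<exists>j\<in>{i-N..i-1}. xs j \<noteq> 0"
    and "i - (qwin N xs i + 1) \<le> l" "l \<le> i - 1" "us l"
    and "prb \<eta> N pol n {(s,u,x,q). (\<forall>j\<in>{1..i}. u j = us j) \<and> (\<forall>j\<in>{1..i-1}. x j = xs j)} > 0"
    and "prb \<eta> N pol n {(s,u,x,q). (\<forall>j\<in>{l..i}. u j = us j) \<and> qwin N x i = qwin N xs i} > 0"
  shows "cprb \<eta> N pol n {(s,u,x,q). x i = xi}
           {(s,u,x,q). (\<forall>j\<in>{1..i}. u j = us j) \<and> (\<forall>j\<in>{1..i-1}. x j = xs j)}
       = cprb \<eta> N pol n {(s,u,x,q). x i = xi}
           {(s,u,x,q). (\<forall>j\<in>{l..i}. u j = us j) \<and> qwin N x i = qwin N xs i}"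
proof -
  have iN: "N + 1 \<le> i" by fact
  from assms(8) obtain j0 where j0: "j0 \<in> {i-N..i-1}" "xs j0 \<noteq> 0" by blast
  have win1: "\<forall>t\<in>{i-N..i-1}. xs t \<in> {0,1}" using assms(7) iN by auto
  have "xs j0 \<in> {0,1}" using win1 j0(1) by blast
  then have xj0: "xs j0 = 1" using j0(2) by auto
  let ?P = "\<lambda>j. j \<in> {i-N..i-1} \<and> xs j = 1"
  define G where "G = Greatest ?P"
  have PG: "?P G" unfolding G_def by (rule GreatestI_nat[of ?P j0 "i-1"]) (use j0 xj0 in auto)
  have PGm: "y \<le> G" if "?P y" for y unfolding G_def by (rule Greatest_le_nat[of ?P y "i-1"]) (use that in auto)
  have GN: "i - N \<le> G" "G \<le> i - 1" using PG by auto
  have xsG0: "\<forall>t\<in>{G<..i-1}. xs t = 0"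
  proof
    fix t assume t: "t \<in> {G<..i-1}"
    then have tw: "t \<in> {i-N..i-1}" using GN by auto
    have "xs t \<noteq> 1" using PGm[of t] t tw by auto
    then show "xs t = 0" using win1 tw by auto
  qed
  have q0: "qwin N xs i = i - 1 - G" using qwin_char[OF win1 GN iN] PG xsG0 by simp
  have kG: "i - (qwin N xs i + 1) = G" using q0 GN iN by simp
  have Gl: "G \<le> l" using assms(9) kG by simp
  have G1: "1 \<le> G" using GN iN by simp
  have li: "l < i" using assms(10) iN by simp
  have xs0: "\<forall>t\<in>{G<..<i}. xs t = 0" using xsG0 by auto
  have ikN: "i - G \<le> N" using GN iN by simp
  have xsl: "xs l \<in> {0,1}" using assms(7) Gl G1 assms(10) by auto
  have xsG: "xs G = 1" using PG by simp
  define Hf where "Hf = (\<lambda>(u::nat\<Rightarrow>bool) (x::nat\<Rightarrow>nat). \<forall>t\<in>{1..<l}. u t = us t \<and> x t = xs t)"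
  define Hc where "Hc = (\<lambda>(u::nat\<Rightarrow>bool) (x::nat\<Rightarrow>nat). \<forall>t\<in>{G..<l}. x t = xs t)"
  define W where "W = (\<lambda>\<phi>::nat\<Rightarrow>real. \<Sum>\<rho>\<in>{0,1}. \<phi> (fstrat (us i) \<rho>) * Mt \<eta> us xs l (i-l) \<rho> (xs l))"
  have "\<exists>K. \<forall>\<phi>. SS \<eta> N pol i (\<lambda>(s,u,x,q). ind (Ev Hf l us xs (i-1) u x) * ind (u i = us i) * \<phi> (x i))
      = (\<Sum>\<rho>\<in>{0,1}. \<phi> (fstrat (us i) \<rho>) * Mt \<eta> us xs l (i-l) \<rho> (xs l)) * K"
    by (rule final[where k=G]) (use G1 Gl li xsG xs0 ikN assms(11) xsl in \<open>auto simp: Hf_def\<close>)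
  then obtain Kf where Kf: "\<And>\<phi>. SS \<eta> N pol i (\<lambda>(s,u,x,q). ind (Ev Hf l us xs (i-1) u x) * ind (u i = us i) * \<phi> (x i)) = W \<phi> * Kf"
    unfolding W_def by blast
  have "\<exists>K. \<forall>\<phi>. SS \<eta> N pol i (\<lambda>(s,u,x,q). ind (Ev Hc l us xs (i-1) u x) * ind (u i = us i) * \<phi> (x i))
      = (\<Sum>\<rho>\<in>{0,1}. \<phi> (fstrat (us i) \<rho>) * Mt \<eta> us xs l (i-l) \<rho> (xs l)) * K"
    by (rule final[where k=G]) (use G1 Gl li xsG xs0 ikN assms(11) xsl in \<open>auto simp: Hc_def\<close>)
  then obtain Kc where Kc: "\<And>\<phi>. SS \<eta> N pol i (\<lambda>(s,u,x,q). ind (Ev Hc l us xs (i-1) u x) * ind (u i = us i) * \<phi> (x i)) = W \<phi> * Kc"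
    unfolding W_def by blast
  define A :: "traj set" where "A = {(s,u,x,q). x i = xi}"
  define Bf :: "traj set" where "Bf = {(s,u,x,q). (\<forall>j\<in>{1..i}. u j = us j) \<and> (\<forall>j\<in>{1..i-1}. x j = xs j)}"
  define Bc :: "traj set" where "Bc = {(s,u,x,q). (\<forall>j\<in>{l..i}. u j = us j) \<and> qwin N x i = qwin N xs i}"
  have marg: "prb \<eta> N pol n E = SS \<eta> N pol i (\<lambda>\<omega>. ind (\<omega> \<in> E))"
    if "\<And>j \<omega> t. i \<le> j \<Longrightarrow> (extt j \<omega> t \<in> E) = (\<omega> \<in> E)" for E
    unfolding prb_SS by (rule SS_marg_n[OF assms(4) _ assms(6)]) (use that in auto)
  have qloc: "qwin N (x(Suc j := y)) i = qwin N x i" if "i \<le> j" for x :: "nat \<Rightarrow> nat" and j y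
    by (rule qwin_local) (use that iN in auto)
  have updA: "(extt j \<omega> t \<in> A) = (\<omega> \<in> A)" if "i \<le> j" for j \<omega> t
    using that by (cases \<omega>; cases t) (auto simp: extt_def A_def)
  have updBf: "(extt j \<omega> t \<in> Bf) = (\<omega> \<in> Bf)" if "i \<le> j" for j \<omega> t
    using that by (cases \<omega>; cases t) (auto simp: extt_def Bf_def)
  have updBc: "(extt j \<omega> t \<in> Bc) = (\<omega> \<in> Bc)" if "i \<le> j" for j \<omega> t
    using that by (cases \<omega>; cases t) (auto simp: extt_def Bc_def qloc)
  have cf: "((s,u,x,q) \<in> Bf) = (Ev Hf l us xs (i-1) u x \<and> u i = us i)" for s u x q
  proof -
    have cov: "(\<forall>t\<in>{1..i}. P t) = ((\<forall>t\<in>{1..<l}. P t) \<and> (\<forall>t\<in>{l..i-1}. P t) \<and> P i)" for P :: "nat \<Rightarrow> bool"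
    proof
      assume a: "\<forall>t\<in>{1..i}. P t"
      then show "(\<forall>t\<in>{1..<l}. P t) \<and> (\<forall>t\<in>{l..i-1}. P t) \<and> P i" using Gl G1 li by auto
    next
      assume a: "(\<forall>t\<in>{1..<l}. P t) \<and> (\<forall>t\<in>{l..i-1}. P t) \<and> P i"
      show "\<forall>t\<in>{1..i}. P t"
      proof
        fix t assume t: "t \<in> {1..i}"
        show "P t"
        proof (cases "t < l")
          case True then show ?thesis using a t by auto
        next
          case False
          show ?thesis
          proof (cases "t = i")
            case True then show ?thesis using a by simp
          next
            case False2: False
            then have "t \<in> {l..i-1}" using False t by auto
            then show ?thesis using a by blast
          qed
        qed
      qed
    qed
    have cov2: "(\<forall>t\<in>{1..i-1}. P t) = ((\<forall>t\<in>{1..<l}. P t) \<and> (\<forall>t\<in>{l..i-1}. P t))" for P :: "nat \<Rightarrow> bool"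
    proof
      assume a: "\<forall>t\<in>{1..i-1}. P t"
      then show "(\<forall>t\<in>{1..<l}. P t) \<and> (\<forall>t\<in>{l..i-1}. P t)" using Gl G1 li by auto
    next
      assume a: "(\<forall>t\<in>{1..<l}. P t) \<and> (\<forall>t\<in>{l..i-1}. P t)"
      show "\<forall>t\<in>{1..i-1}. P t"
      proof
        fix t assume t: "t \<in> {1..i-1}"
        show "P t"
        proof (cases "t < l")
          case True then show ?thesis using a t by auto
        next
          case False
          then have "t \<in> {l..i-1}" using t by auto
          then show ?thesis using a by blast
        qed
      qed
    qed
    show ?thesis unfolding Bf_def Ev_def Hf_def mem_Collect_eq prod.case ball_conj_distrib cov[of "\<lambda>t. u t = us t"] cov2[of "\<lambda>t. x t = xs t"] by blast
  qed
  have cc: "((s,u,x,q) \<in> Bc) = (Ev Hc l us xs (i-1) u x \<and> u i = us i)" if om: "(s,u,x,q) \<in> Omega N i" for s u x q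
  proof -
    have x01': "\<forall>t\<in>{1..i}. x t \<in> {0,1}" using om by (auto simp: Omega_def PiE_iff)
    have x01: "\<forall>t\<in>{i-N..i-1}. x t \<in> {0,1}"
    proof
      fix t assume "t \<in> {i-N..i-1}"
      then have "t \<in> {1..i}" using iN by auto
      then show "x t \<in> {0,1}" using x01' by blast
    qed
    have "(qwin N x i = qwin N xs i) = (x G = 1 \<and> (\<forall>t\<in>{G<..i-1}. x t = 0))"
      unfolding q0 by (rule qwin_char[OF x01 GN iN])
    also have "\<dots> = (\<forall>t\<in>{G..i-1}. x t = xs t)"
      using xsG xsG0 GN by (auto simp: le_less)
    finally have qq: "(qwin N x i = qwin N xs i) = (\<forall>t\<in>{G..i-1}. x t = xs t)" .
    have l1: "l \<le> i - 1" using li by simp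
    show ?thesis unfolding Bc_def Ev_def Hc_def mem_Collect_eq prod.case qq ball_conj_distrib
      split_ivl1[OF li, of "\<lambda>t. u t = us t"] split_ivl2[OF Gl l1, of "\<lambda>t. x t = xs t"] by blast
  qed
  have Pf: "prb \<eta> N pol n (A \<inter> Bf) = W (\<lambda>z. ind (z = xi)) * Kf"
  proof -
    have "prb \<eta> N pol n (A \<inter> Bf) = SS \<eta> N pol i (\<lambda>\<omega>. ind (\<omega> \<in> A \<inter> Bf))"
      by (rule marg) (simp add: updA updBf)
    also have "\<dots> = SS \<eta> N pol i (\<lambda>(s,u,x,q). ind (Ev Hf l us xs (i-1) u x) * ind (u i = us i) * (\<lambda>z. ind (z = xi)) (x i))"
      apply (rule SS_cong)
      subgoal for \<omega> by (cases \<omega>) (simp add: A_def cf ind_def)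
      done
    also have "\<dots> = W (\<lambda>z. ind (z = xi)) * Kf" by (rule Kf)
    finally show ?thesis .
  qed
  have Df: "prb \<eta> N pol n Bf = W (\<lambda>z. 1) * Kf"
  proof -
    have "prb \<eta> N pol n Bf = SS \<eta> N pol i (\<lambda>\<omega>. ind (\<omega> \<in> Bf))"
      by (rule marg) (simp add: updBf)
    also have "\<dots> = SS \<eta> N pol i (\<lambda>(s,u,x,q). ind (Ev Hf l us xs (i-1) u x) * ind (u i = us i) * (\<lambda>z. 1) (x i))"
      apply (rule SS_cong)
      subgoal for \<omega> by (cases \<omega>) (simp add: cf ind_def)
      done
    also have "\<dots> = W (\<lambda>z. 1) * Kf" by (rule Kf)
    finally show ?thesis .
  qed
  have Pc: "prb \<eta> N pol n (A \<inter> Bc) = W (\<lambda>z. ind (z = xi)) * Kc"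
  proof -
    have "prb \<eta> N pol n (A \<inter> Bc) = SS \<eta> N pol i (\<lambda>\<omega>. ind (\<omega> \<in> A \<inter> Bc))"
      by (rule marg) (simp add: updA updBc)
    also have "\<dots> = SS \<eta> N pol i (\<lambda>(s,u,x,q). ind (Ev Hc l us xs (i-1) u x) * ind (u i = us i) * (\<lambda>z. ind (z = xi)) (x i))"
      apply (rule SS_cong)
      subgoal for \<omega> by (cases \<omega>) (simp add: A_def cc ind_def)
      done
    also have "\<dots> = W (\<lambda>z. ind (z = xi)) * Kc" by (rule Kc)
    finally show ?thesis .
  qed
  have Dc: "prb \<eta> N pol n Bc = W (\<lambda>z. 1) * Kc"
  proof -
    have "prb \<eta> N pol n Bc = SS \<eta> N pol i (\<lambda>\<omega>. ind (\<omega> \<in> Bc))"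
      by (rule marg) (simp add: updBc)
    also have "\<dots> = SS \<eta> N pol i (\<lambda>(s,u,x,q). ind (Ev Hc l us xs (i-1) u x) * ind (u i = us i) * (\<lambda>z. 1) (x i))"
      apply (rule SS_cong)
      subgoal for \<omega> by (cases \<omega>) (simp add: cc ind_def)
      done
    also have "\<dots> = W (\<lambda>z. 1) * Kc" by (rule Kc)
    finally show ?thesis .
  qed
  have posf: "W (\<lambda>z. 1) * Kf > 0" using assms(12)[folded Bf_def] Df by simp
  have posc: "W (\<lambda>z. 1) * Kc > 0" using assms(13)[folded Bc_def] Dc by simp
  have "cprb \<eta> N pol n A Bf = cprb \<eta> N pol n A Bc"
    unfolding cprb_def Pf Df Pc Dc using posf posc by auto
  then show ?thesis unfolding A_def Bf_def Bc_def .
qed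

end
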